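(* Let $m\in\mathbb{N}$ and $\beta\in(1,\mathcal{G}(m))$. There exists a constant $c(\beta)>0$, depending only on $\beta$ (and $m$), such that for every $x\in(0,\frac{m}{\beta-1})$, $\dim_H(\Sigma_{\beta,m}(x))\ge c(\beta)$.
   Context: $\mathcal{G}(m)=k+1$ if $m=2k$ and $\mathcal{G}(m)=\frac{k+1+\sqrt{k^2+6k+5}}{2}$ if $m=2k+1$. For $x\in[0,\frac{m}{\beta-1}]$, $\Sigma_{\beta,m}(x)=\{(\epsilon_i)_{i=1}^\infty\in\{0,\ldots,m\}^{\mathbb{N}}:\sum_{i\ge1}\epsilon_i\beta^{-i}=x\}$. The space $\{0,\ldots,m\}^{\mathbb{N}}$ carries the metric $d(x,y)=(m+1)^{-n(x,y)}$ for $x\ne y$, where $n(x,y)=\inf\{i:x_i\ne y_i\}$, and $d(x,x)=0$; Hausdorff dimension is taken with respect to $d$. *)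

theory Defs
  imports "HOL-Analysis.Analysis"
begin

definition G :: "nat \<Rightarrow> real" where
  "G m = (if even m then real (m div 2) + 1
          else (let k = real (m div 2) in (k + 1 + sqrt (k^2 + 6*k + 5)) / 2))"

text \<open>Sequences (epsilon_i) for i >= 1 are represented 0-based: eps 0 is epsilon_1.\<close>
definition seq_space :: "nat \<Rightarrow> (nat \<Rightarrow> nat) set" where
  "seq_space m = {e. \<forall>i. e i \<le> m}"

text \<open>d(x,y) = (m+1)^(-n(x,y)), n(x,y) the first (1-based) index where x and y differ.\<close>
definition seq_dist :: "nat \<Rightarrow> (nat \<Rightarrow> nat) \<Rightarrow> (nat \<Rightarrow> nat) \<Rightarrow> real" where
  "seq_dist m x y = (if x = y then 0 else 1 / (real m + 1) ^ Suc (LEAST i. x i \<noteq> y i))"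

definition seq_diam :: "nat \<Rightarrow> (nat \<Rightarrow> nat) set \<Rightarrow> real" where
  "seq_diam m U = (if U = {} then 0 else Sup {seq_dist m x y | x y. x \<in> U \<and> y \<in> U})"

definition hausdorff_pre :: "nat \<Rightarrow> real \<Rightarrow> real \<Rightarrow> (nat \<Rightarrow> nat) set \<Rightarrow> ennreal" where
  "hausdorff_pre m s \<delta> E =
     (INF U \<in> {U :: nat \<Rightarrow> (nat \<Rightarrow> nat) set.
                 (\<forall>i. U i \<subseteq> seq_space m \<and> seq_diam m (U i) \<le> \<delta>) \<and> E \<subseteq> (\<Union>i. U i)}.
        (\<Sum>i. ennreal (seq_diam m (U i) powr s)))"

definition hausdorff_measure :: "nat \<Rightarrow> real \<Rightarrow> (nat \<Rightarrow> nat) set \<Rightarrow> ennreal" where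
  "hausdorff_measure m s E = (SUP \<delta> \<in> {0<..}. hausdorff_pre m s \<delta> E)"

definition hausdorff_dim :: "nat \<Rightarrow> (nat \<Rightarrow> nat) set \<Rightarrow> ereal" where
  "hausdorff_dim m E = Inf {ereal s | s. 0 \<le> s \<and> hausdorff_measure m s E = 0}"

definition Sigma_bm :: "real \<Rightarrow> nat \<Rightarrow> real \<Rightarrow> (nat \<Rightarrow> nat) set" where
  "Sigma_bm \<beta> m x = {e \<in> seq_space m. (\<lambda>i. real (e i) / \<beta> ^ Suc i) sums x}"

end

theory Submission imports Defs "HOL-Probability.Probability" begin

definition Pc :: "(nat \<Rightarrow> bool) measure" where
  "Pc = PiM UNIV (\<lambda>_. measure_pmf (bernoulli_pmf (1/2)))"

definition cyl :: "(nat \<Rightarrow> bool) \<Rightarrow> nat \<Rightarrow> (nat \<Rightarrow> bool) set" where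
  "cyl b k = {\<omega>. \<forall>j<k. \<omega> j = b j}"

lemma Pc_space: "space Pc = UNIV"
  by (simp add: Pc_def space_PiM PiE_UNIV_domain)

lemma Pc_prob: "prob_space Pc"
  unfolding Pc_def by (rule prob_space_PiM, rule prob_space_measure_pmf)

lemma cyl_emb: "cyl b k = prod_emb UNIV (\<lambda>_. measure_pmf (bernoulli_pmf (1/2))) {..<k} (PiE {..<k} (\<lambda>j. {b j}))"
  by (rule set_eqI) (simp add: cyl_def prod_emb_def space_PiM PiE_UNIV_domain restrict_PiE_iff Pi_iff, blast)

lemma cyl_sets: "cyl b k \<in> sets Pc"
  unfolding cyl_emb Pc_def by (rule sets_PiM_I) auto

lemma cyl_emeasure: "emeasure Pc (cyl b k) = ennreal ((1/2)^k)"
proof -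
  have "emeasure Pc (cyl b k) = (\<Prod>j\<in>{..<k}. emeasure (measure_pmf (bernoulli_pmf (1/2))) {b j})"
    unfolding cyl_emb Pc_def
    by (rule emeasure_PiM_emb) (auto simp: prob_space_measure_pmf)
  also have "\<dots> = (\<Prod>j\<in>{..<k}. ennreal (1/2))"
    by (intro prod.cong refl) (rename_tac j, case_tac "b j"; simp add: emeasure_pmf_single)
  also have "\<dots> = ennreal ((1/2)^k)"
    by (simp only: prod_constant card_lessThan, rule ennreal_power, simp)
  finally show ?thesis .
qed


lemma seq_dist_le: "seq_dist m p q \<le> 1/(real m+1)"
proof (cases "p = q")
  case True then show ?thesis by (simp add: seq_dist_def)
next
  case False
  have "1 \<le> (real m + 1) ^ (LEAST i. p i \<noteq> q i)" by (rule one_le_power) simp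
  then have "real m + 1 \<le> (real m+1) ^ Suc (LEAST i. p i \<noteq> q i)"
    by (simp add: mult_le_cancel_left1)
  then show ?thesis using False by (simp add: seq_dist_def frac_le)
qed

lemma seq_dist_nonneg: "0 \<le> seq_dist m p q"
  by (simp add: seq_dist_def)

lemma seq_dist_pos: "p \<noteq> q \<Longrightarrow> 0 < seq_dist m p q"
  by (simp add: seq_dist_def)

lemma seq_dist_agree:
  assumes "p \<noteq> q" "seq_dist m p q < (1/(real m+1))^n"
  shows "\<forall>i<n. p i = q i"
proof -
  define j where "j = (LEAST i. p i \<noteq> q i)"
  have "(1/(real m+1))^Suc j < (1/(real m+1))^n"
    using assms unfolding seq_dist_def j_def by (simp add: power_one_over)
  then have "n < Suc j"
    by (smt (verit, ccfv_SIG) divide_le_eq_1_pos divide_pos_pos of_nat_0_le_iff power_decreasing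
       not_less)
  show ?thesis
  proof (intro allI impI)
    fix i assume "i < n"
    then have "i < (LEAST i. p i \<noteq> q i)" using \<open>n < Suc j\<close> unfolding j_def by simp
    then show "p i = q i" using not_less_Least by blast
  qed
qed

lemma bdd_dist: "bdd_above {seq_dist m x y | x y. x \<in> U \<and> y \<in> U}"
  using seq_dist_le by (intro bdd_aboveI[of _ "1/(real m+1)"]) blast

lemma diam_ge: "p \<in> U \<Longrightarrow> q \<in> U \<Longrightarrow> seq_dist m p q \<le> seq_diam m U"
  unfolding seq_diam_def using bdd_dist by (auto intro!: cSup_upper)

lemma diam_le: "seq_diam m U \<le> 1/(real m+1)"
proof (cases "U = {}")
  case True then show ?thesis by (simp add: seq_diam_def)
next
  case False
  then have "{seq_dist m x y | x y. x \<in> U \<and> y \<in> U} \<noteq> {}" by blast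
  then have "Sup {seq_dist m x y | x y. x \<in> U \<and> y \<in> U} \<le> 1/(real m+1)"
    by (rule cSup_least) (use seq_dist_le in blast)
  then show ?thesis using False by (simp add: seq_diam_def)
qed

lemma diam_nonneg: "0 \<le> seq_diam m U"
proof (cases "U = {}")
  case True then show ?thesis by (simp add: seq_diam_def)
next
  case False
  then obtain p where "p \<in> U" by blast
  then show ?thesis using diam_ge[of p U p m] by (simp add: seq_dist_def)
qed

lemma diam_zero: "seq_diam m U \<le> 0 \<Longrightarrow> p \<in> U \<Longrightarrow> q \<in> U \<Longrightarrow> p = q"
  using diam_ge[of p U q m] seq_dist_pos[of p q m] by fastforce

lemma diam_prefix:
  assumes m: "1 \<le> m" and D: "0 < seq_diam m U" and p: "p \<in> U"
  shows "\<exists>n. (1/(real m+1))^Suc n \<le> seq_diam m U \<and> (\<forall>q\<in>U. \<forall>i<n. q i = p i)"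
proof -
  define D where "D = seq_diam m U"
  define x where "x = 1/(real m+1)"
  have x0: "0 < x" "x < 1" using m unfolding x_def by auto
  have Dx: "D \<le> x" unfolding D_def x_def by (rule diam_le)
  obtain n0 where "x^n0 < D" using real_arch_pow_inv[OF _ x0(2), of D] D unfolding D_def by blast
  then have ex: "\<exists>n. x^n \<le> D" by (blast intro: less_imp_le)
  define n1 where "n1 = (LEAST n. x^n \<le> D)"
  have n1: "x^n1 \<le> D" unfolding n1_def using LeastI_ex[OF ex] .
  have "n1 \<noteq> 0"
  proof
    assume "n1 = 0" then show False using n1 Dx x0 by simp
  qed
  then obtain n where n: "n1 = Suc n" using not0_implies_Suc by blast
  have "\<not> x^n \<le> D" using not_less_Least[of n "\<lambda>n. x^n \<le> D"] n unfolding n1_def by simp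
  then have lt: "D < x^n" by simp
  have "\<forall>q\<in>U. \<forall>i<n. q i = p i"
  proof (intro ballI)
    fix q assume q: "q \<in> U"
    show "\<forall>i<n. q i = p i"
    proof (cases "q = p")
      case True then show ?thesis by simp
    next
      case False
      have "seq_dist m q p < x^n" using diam_ge[OF q p, of m] lt unfolding D_def by simp
      then show ?thesis using seq_dist_agree[OF False] unfolding x_def by blast
    qed
  qed
  then show ?thesis using n1 n unfolding D_def x_def by blast
qed

lemma key_ineq:
  fixes a D s s0 :: real and n T k m :: nat
  assumes m: "1 \<le> m" and a: "0 < a" and nk: "real n - real T \<le> a * real k"
    and s0: "s0 = ln 2 / (a * ln (real m + 1))" and s: "0 \<le> s" "s \<le> s0"
    and D: "(1/(real m+1))^Suc n \<le> D" "D \<le> 1"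
  shows "(1/2)^k \<le> 2 powr ((real T + 1)/a) * D powr s"
proof -
  define q where "q = (1/(real m+1))^Suc n"
  have q1: "q \<le> 1" unfolding q_def by (rule power_le_one) (auto simp: field_simps)
  have q0: "0 < q" "q \<le> 1" using q1 unfolding q_def by auto
  have lm: "0 < ln (real m + 1)" using m by simp
  have "(1/2::real)^k = 2 powr (- real k)"
    by (simp add: powr_minus powr_realpow power_one_over inverse_eq_divide)
  also have "\<dots> \<le> 2 powr (- (real n - real T)/a)"
    using nk a by (intro powr_mono) (auto simp: field_simps)
  also have "\<dots> = 2 powr ((real T + 1)/a) * 2 powr (- (real n + 1)/a)"
  proof -
    have "- (real n - real T)/a = (real T + 1)/a + (- (real n + 1)/a)" using a by (simp add: field_simps)
    then show ?thesis by (simp only: powr_add[symmetric])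
  qed
  also have "2 powr (- (real n + 1)/a) = q powr s0"
  proof -
    define c where "c = - (real n + 1)"
    define L where "L = ln (real m + 1)"
    have lq: "ln q = c * L"
      unfolding q_def c_def L_def using m by (simp add: ln_realpow ln_div algebra_simps)
    have sl: "s0 * L = ln 2 / a" unfolding L_def using s0 lm a by (simp add: field_simps)
    have "s0 * ln q = c * (s0 * L)" unfolding lq by (simp only: mult.left_commute)
    also have "\<dots> = c / a * ln 2" unfolding sl by simp
    finally have "s0 * ln q = - (real n + 1)/a * ln 2" unfolding c_def .
    then show ?thesis using q0 by (simp add: powr_def)
  qed
  also have "q powr s0 \<le> q powr s" using q0 s by (intro powr_mono') auto
  also have "q powr s \<le> D powr s" using q0 s D unfolding q_def by (intro powr_mono2) auto
  finally show ?thesis by (simp add: mult_left_mono)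
qed

locale dyn =
  fixes m :: nat and \<beta> M \<epsilon> :: real
  assumes m1: "1 \<le> m" and b1: "1 < \<beta>" and Mdef: "M * (\<beta> - 1) = real m"
  and e0: "0 < \<epsilon>" and e1: "1 + \<epsilon> < M" and e2: "(\<beta>+1)*(1+\<epsilon>) < M*\<beta>"
  and mid: "\<And>z. M-1-\<epsilon> \<le> z \<Longrightarrow> z \<le> 1+\<epsilon> \<Longrightarrow>
              \<exists>d::nat. d+1 \<le> m \<and> real d+1+\<epsilon> < \<beta>*z \<and> \<beta>*z < real d+M-\<epsilon>"
begin

lemma Mb: "M * \<beta> = M + real m" using Mdef by (simp add: algebra_simps)

definition inD :: "real \<Rightarrow> bool" where
  "inD y \<longleftrightarrow> (\<exists>d::nat. d+1 \<le> m \<and> real d+1+\<epsilon> < \<beta>*y \<and> \<beta>*y < real d+M-\<epsilon>)"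
definition dD :: "real \<Rightarrow> nat" where
  "dD y = (SOME d::nat. d+1 \<le> m \<and> real d+1+\<epsilon> < \<beta>*y \<and> \<beta>*y < real d+M-\<epsilon>)"
definition low :: "real \<Rightarrow> bool" where "low y \<longleftrightarrow> \<beta>*y \<le> 1+\<epsilon>"
definition high :: "real \<Rightarrow> bool" where "high y \<longleftrightarrow> M*\<beta> - 1 - \<epsilon> \<le> \<beta>*y"
definition gd :: "real \<Rightarrow> nat" where
  "gd y = (SOME d::nat. d+2 \<le> m \<and> real d + M - \<epsilon> \<le> \<beta>*y \<and> \<beta>*y \<le> real d+2+\<epsilon>)"
definition sig :: "real \<Rightarrow> nat" where
  "sig y = (if low y then 0 else if high y then m else gd y + 1)"
definition dig :: "real \<Rightarrow> bool \<Rightarrow> nat" where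
  "dig y b = (if inD y then (if b then dD y else dD y + 1) else sig y)"
definition S :: "real \<Rightarrow> real" where "S y = \<beta>*y - real (sig y)"

lemma inD_bounds: assumes "inD y" shows "0 < y" "y < M"
proof -
  obtain d::nat where d: "d+1 \<le> m" "real d+1+\<epsilon> < \<beta>*y" "\<beta>*y < real d+M-\<epsilon>"
    using assms unfolding inD_def by blast
  have "0 < \<beta>*y" using d e0 by linarith
  then show "0 < y" using b1 by (simp add: zero_less_mult_iff)
  have "real d + 1 \<le> real m" using d(1) by linarith
  then have "\<beta>*y < \<beta>*M" using d(3) Mb e0 by (simp add: algebra_simps)
  then show "y < M" using b1 by simp
qed

lemma dD: assumes "inD y"
  shows "dD y + 1 \<le> m" "real (dD y)+1+\<epsilon> < \<beta>*y" "\<beta>*y < real (dD y)+M-\<epsilon>"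
proof -
  have "\<exists>d::nat. d+1 \<le> m \<and> real d+1+\<epsilon> < \<beta>*y \<and> \<beta>*y < real d+M-\<epsilon>"
    using assms unfolding inD_def .
  from someI_ex[OF this] show "dD y + 1 \<le> m" "real (dD y)+1+\<epsilon> < \<beta>*y" "\<beta>*y < real (dD y)+M-\<epsilon>"
    unfolding dD_def by blast+
qed

lemma classify:
  assumes "0 < y" "y < M" "\<not> inD y" "\<not> low y" "\<not> high y"
  shows "\<exists>d::nat. d+2 \<le> m \<and> real d + M - \<epsilon> \<le> \<beta>*y \<and> \<beta>*y \<le> real d+2+\<epsilon>"
proof -
  define t where "t = \<beta>*y"
  have t1: "1+\<epsilon> < t" using assms(4) unfolding low_def t_def by simp
  have t2: "t < M + real m - 1 - \<epsilon>" using assms(5) Mb unfolding high_def t_def by simp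
  define c where "c = \<lceil>t-1-\<epsilon>\<rceil>"
  have c1: "c \<ge> 1" using t1 unfolding c_def by simp
  define d0 where "d0 = nat (c - 1)"
  have rd0: "real d0 = real_of_int c - 1" using c1 unfolding d0_def by simp
  have lo: "real d0 < t-1-\<epsilon>" using rd0 unfolding c_def by linarith
  have hi: "t-1-\<epsilon> \<le> real d0 + 1" using rd0 unfolding c_def by linarith
  show ?thesis
  proof (cases "d0 + 1 \<le> m")
    case True
    show ?thesis
    proof (cases "t < real d0 + M - \<epsilon>")
      case True
      then have "inD y" using \<open>d0+1 \<le> m\<close> lo unfolding inD_def t_def by force
      with assms(3) show ?thesis by simp
    next
      case False
      then have "real d0 < real m - 1" using t2 by linarith
      then have "d0 + 2 \<le> m" by linarith
      then show ?thesis using False hi unfolding t_def by (intro exI[of _ d0]) auto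
    qed
  next
    case False
    then have "real m \<le> real d0" by linarith
    then have "inD y" unfolding inD_def using m1 lo t2
      by (intro exI[of _ "m-1"]) (auto simp: t_def of_nat_diff)
    with assms(3) show ?thesis by simp
  qed
qed

lemma gd: assumes "0 < y" "y < M" "\<not> inD y" "\<not> low y" "\<not> high y"
  shows "gd y + 2 \<le> m" "real (gd y) + M - \<epsilon> \<le> \<beta>*y" "\<beta>*y \<le> real (gd y)+2+\<epsilon>"
  using someI_ex[OF classify[OF assms]] unfolding gd_def by blast+

lemma step_mid: assumes "0 < y" "y < M" "\<not> inD y" "\<not> low y" "\<not> high y"
  shows "inD (S y)"
proof -
  have "S y = \<beta>*y - (real (gd y) + 1)" using assms unfolding S_def sig_def by simp
  then show ?thesis using gd[OF assms] mid[of "S y"] unfolding inD_def by auto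
qed

lemma step_bounds: assumes "0 < y" "y < M" "\<not> inD y"
  shows "sig y \<le> m" "0 < S y" "S y < M"
proof -
  show "sig y \<le> m"
  proof (cases "low y \<or> high y")
    case True then show ?thesis unfolding sig_def by auto
  next
    case False then show ?thesis using gd[OF assms] unfolding sig_def by auto
  qed
  have "0 < S y \<and> S y < M"
  proof (cases "low y")
    case True
    then show ?thesis using assms b1 e1 unfolding S_def sig_def low_def by auto
  next
    case nl: False
    show ?thesis
    proof (cases "high y")
      case True
      have "\<beta>*y < \<beta>*M" using assms b1 by simp
      then show ?thesis using True nl e1 Mb unfolding S_def sig_def high_def by (auto simp: algebra_simps)
    next
      case False
      have "inD (S y)" using step_mid assms nl False by blast
      then show ?thesis using inD_bounds by blast
    qed
  qed
  then show "0 < S y" "S y < M" by auto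
qed

lemma branch_bounds: assumes "inD y"
  shows "dig y b \<le> m" "\<epsilon> < \<beta>*y - real (dig y b)" "\<beta>*y - real (dig y b) < M - \<epsilon>"
proof -
  note d = dD[OF assms]
  have "dig y b \<le> m \<and> \<epsilon> < \<beta>*y - real (dig y b) \<and> \<beta>*y - real (dig y b) < M - \<epsilon>"
  proof (cases b)
    case True
    then have "dig y b = dD y" using assms unfolding dig_def by simp
    then show ?thesis using d e0 by simp
  next
    case False
    then have "dig y b = dD y + 1" using assms unfolding dig_def by simp
    then show ?thesis using d e0 by simp
  qed
  then show "dig y b \<le> m" "\<epsilon> < \<beta>*y - real (dig y b)" "\<beta>*y - real (dig y b) < M - \<epsilon>" by auto
qed

lemma dig_bounds: assumes "0 < y" "y < M"
  shows "dig y b \<le> m" "0 < \<beta>*y - real (dig y b)" "\<beta>*y - real (dig y b) < M"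
proof -
  have "dig y b \<le> m \<and> 0 < \<beta>*y - real (dig y b) \<and> \<beta>*y - real (dig y b) < M"
  proof (cases "inD y")
    case True then show ?thesis using branch_bounds[OF True, of b] e0 by auto
  next
    case False then show ?thesis using step_bounds[OF assms False] unfolding dig_def S_def by auto
  qed
  then show "dig y b \<le> m" "0 < \<beta>*y - real (dig y b)" "\<beta>*y - real (dig y b) < M" by auto
qed

primrec st :: "(nat \<Rightarrow> bool) \<Rightarrow> real \<Rightarrow> nat \<Rightarrow> real \<times> nat" where
  "st \<omega> x 0 = (x, 0)"
| "st \<omega> x (Suc i) = (case st \<omega> x i of (y, k) \<Rightarrow>
      (\<beta>*y - real (dig y (\<omega> k)), if inD y then Suc k else k))"

definition Y :: "(nat \<Rightarrow> bool) \<Rightarrow> real \<Rightarrow> nat \<Rightarrow> real" where "Y \<omega> x i = fst (st \<omega> x i)"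
definition Kc :: "(nat \<Rightarrow> bool) \<Rightarrow> real \<Rightarrow> nat \<Rightarrow> nat" where "Kc \<omega> x i = snd (st \<omega> x i)"
definition ee :: "(nat \<Rightarrow> bool) \<Rightarrow> real \<Rightarrow> nat \<Rightarrow> nat" where
  "ee \<omega> x i = dig (Y \<omega> x i) (\<omega> (Kc \<omega> x i))"

lemma Y_0[simp]: "Y \<omega> x 0 = x" and Kc_0[simp]: "Kc \<omega> x 0 = 0"
  by (simp_all add: Y_def Kc_def)

lemma Y_Suc: "Y \<omega> x (Suc i) = \<beta> * Y \<omega> x i - real (ee \<omega> x i)"
  and Kc_Suc: "Kc \<omega> x (Suc i) = (if inD (Y \<omega> x i) then Suc (Kc \<omega> x i) else Kc \<omega> x i)"
  by (simp_all add: Y_def Kc_def ee_def split: prod.split)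

lemma Y_bounds: assumes "0 < x" "x < M" shows "0 < Y \<omega> x i \<and> Y \<omega> x i < M"
proof (induction i)
  case 0 then show ?case using assms by simp
next
  case (Suc i)
  then show ?case using dig_bounds[of "Y \<omega> x i" "\<omega> (Kc \<omega> x i)"] unfolding Y_Suc ee_def by auto
qed

lemma ee_le: assumes "0 < x" "x < M" shows "ee \<omega> x i \<le> m"
  using Y_bounds[OF assms] dig_bounds unfolding ee_def by blast

lemma psum: "(\<Sum>i<n. real (ee \<omega> x i) / \<beta>^Suc i) = x - Y \<omega> x n / \<beta>^n"
proof (induction n)
  case 0 then show ?case by simp
next
  case (Suc n)
  have "\<beta>^n \<noteq> 0" using b1 by simp
  have "(\<Sum>i<Suc n. real (ee \<omega> x i) / \<beta>^Suc i) = (x - Y \<omega> x n / \<beta>^n) + real (ee \<omega> x n) / \<beta>^Suc n"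
    using Suc by simp
  also have "\<dots> = x - Y \<omega> x (Suc n) / \<beta>^Suc n"
    using \<open>\<beta>^n \<noteq> 0\<close> b1 by (simp add: Y_Suc field_simps)
  finally show ?case .
qed

lemma in_Sigma: assumes "0 < x" "x < M" shows "ee \<omega> x \<in> Sigma_bm \<beta> m x"
proof -
  have lim0: "(\<lambda>n. Y \<omega> x n / \<beta>^n) \<longlonglongrightarrow> 0"
  proof (rule tendsto_sandwich[of "\<lambda>_. 0" _ _ "\<lambda>n. M * (1/\<beta>)^n"])
    show "\<forall>\<^sub>F n in sequentially. 0 \<le> Y \<omega> x n / \<beta>^n"
      using Y_bounds[OF assms] b1 by (auto intro!: always_eventually less_imp_le)
    show "\<forall>\<^sub>F n in sequentially. Y \<omega> x n / \<beta>^n \<le> M * (1/\<beta>)^n"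
    proof (intro always_eventually allI)
      fix n
      have "Y \<omega> x n \<le> M" using Y_bounds[OF assms] less_imp_le by blast
      then show "Y \<omega> x n / \<beta>^n \<le> M * (1/\<beta>)^n" using b1
        by (simp add: power_one_over divide_right_mono)
    qed
    show "(\<lambda>n. M * (1/\<beta>)^n) \<longlonglongrightarrow> 0"
      using b1 by (intro tendsto_mult_right_zero LIMSEQ_power_zero) auto
  qed simp
  have "(\<lambda>n. x - Y \<omega> x n / \<beta>^n) \<longlonglongrightarrow> x - 0"
    by (intro tendsto_diff tendsto_const lim0)
  then have "(\<lambda>i. real (ee \<omega> x i) / \<beta>^Suc i) sums x"
    unfolding sums_def psum by simp
  moreover have "ee \<omega> x \<in> seq_space m" using ee_le[OF assms] unfolding seq_space_def by blast
  ultimately show ?thesis unfolding Sigma_bm_def by blast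
qed

lemma Kc_mono: assumes "i \<le> j" shows "Kc \<omega> x i \<le> Kc \<omega> x j"
  using assms by (induction rule: dec_induct) (auto simp: Kc_Suc)

lemma det: assumes "\<forall>i<n. ee \<omega> x i = ee \<omega>' x i"
  shows "Y \<omega> x n = Y \<omega>' x n \<and> Kc \<omega> x n = Kc \<omega>' x n \<and> (\<forall>j<Kc \<omega> x n. \<omega> j = \<omega>' j)"
  using assms
proof (induction n)
  case 0 then show ?case by simp
next
  case (Suc n)
  then have IH: "Y \<omega> x n = Y \<omega>' x n" "Kc \<omega> x n = Kc \<omega>' x n" "\<forall>j<Kc \<omega> x n. \<omega> j = \<omega>' j"
    and e: "ee \<omega> x n = ee \<omega>' x n" by auto
  show ?case
  proof (cases "inD (Y \<omega> x n)")
    case True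
    have "\<omega> (Kc \<omega> x n) = \<omega>' (Kc \<omega> x n)"
    proof (rule ccontr)
      assume ne: "\<omega> (Kc \<omega> x n) \<noteq> \<omega>' (Kc \<omega> x n)"
      have e2: "dig (Y \<omega> x n) (\<omega> (Kc \<omega> x n)) = dig (Y \<omega> x n) (\<omega>' (Kc \<omega> x n))"
        using e IH(1,2) unfolding ee_def by simp
      have "dig (Y \<omega> x n) True \<noteq> dig (Y \<omega> x n) False" using True unfolding dig_def by simp
      then show False using e2 ne by (cases "\<omega> (Kc \<omega> x n)") auto
    qed
    then have "\<forall>j<Suc (Kc \<omega> x n). \<omega> j = \<omega>' j" using IH(3) less_Suc_eq by auto
    then show ?thesis using True IH e by (simp add: Y_Suc Kc_Suc)
  next
    case False
    then show ?thesis using IH e by (simp add: Y_Suc Kc_Suc)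
  qed
qed

lemma follow: assumes "Y \<omega> x i = y" "\<forall>l<j. \<not> inD ((S^^l) y)"
  shows "l \<le> j \<Longrightarrow> Y \<omega> x (i+l) = (S^^l) y \<and> Kc \<omega> x (i+l) = Kc \<omega> x i"
proof (induction l)
  case 0 then show ?case using assms by simp
next
  case (Suc l)
  then have IH: "Y \<omega> x (i+l) = (S^^l) y" "Kc \<omega> x (i+l) = Kc \<omega> x i" by auto
  have nd: "\<not> inD (Y \<omega> x (i+l))" using assms(2) Suc.prems IH by auto
  then have "ee \<omega> x (i+l) = sig (Y \<omega> x (i+l))" unfolding ee_def dig_def by simp
  then show ?case using IH nd by (simp add: Y_Suc Kc_Suc S_def[of "(S^^l) y"])
qed

lemma lowrun: "0 < y \<Longrightarrow> y \<le> 1+\<epsilon> \<Longrightarrow> 1+\<epsilon> < \<beta>^Suc n * y \<Longrightarrow> \<exists>j\<le>n+1. inD ((S^^j) y)"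
proof (induction n arbitrary: y)
  case 0
  show ?case
  proof (cases "inD y")
    case True then show ?thesis by (intro exI[of _ 0]) auto
  next
    case False
    have nl: "\<not> low y" using 0 unfolding low_def by simp
    have "\<beta>*y \<le> \<beta>*(1+\<epsilon>)" using 0 b1 by simp
    then have nh: "\<not> high y" using e2 unfolding high_def by (simp add: algebra_simps)
    have "inD (S y)" using step_mid[OF 0(1) _ False nl nh] 0 e1 by simp
    then show ?thesis by (intro exI[of _ 1]) auto
  qed
next
  case (Suc n)
  show ?case
  proof (cases "inD y")
    case True then show ?thesis by (intro exI[of _ 0]) auto
  next
    case False
    have "\<beta>*y \<le> \<beta>*(1+\<epsilon>)" using Suc.prems b1 by simp
    then have nh: "\<not> high y" using e2 unfolding high_def by (simp add: algebra_simps)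
    show ?thesis
    proof (cases "low y")
      case False
      have "inD (S y)" using step_mid[OF Suc.prems(1) _ \<open>\<not> inD y\<close> False nh] Suc.prems e1 by simp
      then show ?thesis by (intro exI[of _ 1]) auto
    next
      case True
      have Sy: "S y = \<beta>*y" using True unfolding S_def sig_def by simp
      have "0 < \<beta>*y" using Suc.prems b1 by simp
      moreover have "\<beta>*y \<le> 1+\<epsilon>" using True unfolding low_def .
      moreover have "1+\<epsilon> < \<beta>^Suc n * (\<beta>*y)" using Suc.prems(3) by (simp add: algebra_simps)
      ultimately obtain j where "j \<le> n+1" "inD ((S^^j) (S y))" using Suc.IH Sy by metis
      then show ?thesis by (intro exI[of _ "Suc j"]) (auto simp del: funpow.simps simp add: funpow_Suc_right)
    qed
  qed
qed

lemma highrun: "y < M \<Longrightarrow> M - y \<le> 1+\<epsilon> \<Longrightarrow> 1+\<epsilon> < \<beta>^Suc n * (M - y) \<Longrightarrow> \<exists>j\<le>n+1. inD ((S^^j) y)"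
proof (induction n arbitrary: y)
  case 0
  show ?case
  proof (cases "inD y")
    case True then show ?thesis by (intro exI[of _ 0]) auto
  next
    case False
    have nh: "\<not> high y" using 0 Mb unfolding high_def by (simp add: algebra_simps)
    have "\<beta>*(M-y) \<le> \<beta>*(1+\<epsilon>)" using 0 b1 by simp
    then have nl: "\<not> low y" using e2 unfolding low_def by (simp add: algebra_simps)
    have "0 < y" using 0 e1 by simp
    have "inD (S y)" using step_mid[OF \<open>0<y\<close> 0(1) False nl nh] by simp
    then show ?thesis by (intro exI[of _ 1]) auto
  qed
next
  case (Suc n)
  show ?case
  proof (cases "inD y")
    case True then show ?thesis by (intro exI[of _ 0]) auto
  next
    case False
    have "\<beta>*(M-y) \<le> \<beta>*(1+\<epsilon>)" using Suc.prems b1 by simp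
    then have nl: "\<not> low y" using e2 unfolding low_def by (simp add: algebra_simps)
    have "0 < y" using Suc.prems e1 by simp
    show ?thesis
    proof (cases "high y")
      case False
      have "inD (S y)" using step_mid[OF \<open>0<y\<close> Suc.prems(1) \<open>\<not> inD y\<close> nl False] by simp
      then show ?thesis by (intro exI[of _ 1]) auto
    next
      case True
      have Sy: "M - S y = \<beta>*(M - y)" using True nl Mb unfolding S_def sig_def by (simp add: algebra_simps)
      have "0 < \<beta>*(M-y)" using Suc.prems b1 by simp
      then have "S y < M" using Sy by simp
      moreover have "M - S y \<le> 1+\<epsilon>" using True Sy Mb unfolding high_def by (simp add: algebra_simps)
      moreover have "\<beta>^Suc n * (M - S y) = \<beta>^Suc (Suc n) * (M - y)" using Sy by simp
      moreover have "1+\<epsilon> < \<beta>^Suc n * (M - S y)" using Suc.prems(3) calculation(3) by linarith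
      ultimately obtain j where "j \<le> n+1" "inD ((S^^j) (S y))" using Suc.IH by metis
      then show ?thesis by (intro exI[of _ "Suc j"]) (auto simp del: funpow.simps simp add: funpow_Suc_right)
    qed
  qed
qed

lemma reach: assumes "0 < \<eta>"
  shows "\<exists>N. \<forall>y. \<eta> \<le> y \<longrightarrow> y \<le> M - \<eta> \<longrightarrow> (\<exists>j\<le>N. inD ((S^^j) y))"
proof -
  obtain n where n: "(1+\<epsilon>)/\<eta> < \<beta>^n" using real_arch_pow[OF b1] by blast
  have n1: "1+\<epsilon> < \<beta>^n * \<eta>" using n assms by (simp add: field_simps)
  have "\<beta>^n \<le> \<beta>^Suc n" using b1 by simp
  then have "\<beta>^n * \<eta> \<le> \<beta>^Suc n * \<eta>" using assms by (intro mult_right_mono) auto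
  then have n2: "1+\<epsilon> < \<beta>^Suc n * \<eta>" using n1 by linarith
  have "\<forall>y. \<eta> \<le> y \<longrightarrow> y \<le> M - \<eta> \<longrightarrow> (\<exists>j\<le>n+1. inD ((S^^j) y))"
  proof (intro allI impI)
    fix y assume y: "\<eta> \<le> y" "y \<le> M - \<eta>"
    have bp: "0 < \<beta>^Suc n" using b1 by simp
    show "\<exists>j\<le>n+1. inD ((S^^j) y)"
    proof (cases "inD y")
      case True then show ?thesis by (intro exI[of _ 0]) auto
    next
      case False
      show ?thesis
      proof (cases "low y")
        case True
        have "y \<le> 1+\<epsilon>" using True b1 y assms unfolding low_def
          by (smt (verit, best) mult_le_cancel_right1)
        moreover have "1+\<epsilon> < \<beta>^Suc n * y"
          using n2 mult_left_mono[OF y(1) less_imp_le[OF bp]] by linarith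
        ultimately show ?thesis using lowrun y assms by force
      next
        case nl: False
        show ?thesis
        proof (cases "high y")
          case True
          have "\<beta>*(M - y) \<le> 1+\<epsilon>" using True unfolding high_def by (simp add: algebra_simps)
          then have "M - y \<le> 1+\<epsilon>" using b1 y assms
            by (smt (verit, best) mult_le_cancel_right1 mult.commute)
          moreover have "\<eta> \<le> M - y" using y by simp
          moreover have "1+\<epsilon> < \<beta>^Suc n * (M - y)"
            using n2 mult_left_mono[OF \<open>\<eta> \<le> M - y\<close> less_imp_le[OF bp]] by linarith
          ultimately show ?thesis using highrun y assms by force
        next
          case False
          have "inD (S y)" using step_mid[OF _ _ \<open>\<not> inD y\<close> nl False] y assms by simp
          then show ?thesis by (intro exI[of _ 1]) auto
        qed
      qed
    qed
  qed
  then show ?thesis by blast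
qed

lemma first_branch:
  assumes j: "inD ((S^^j) (Y \<omega> x t))"
  defines "j0 \<equiv> LEAST j. inD ((S^^j) (Y \<omega> x t))"
  shows "j0 \<le> j \<and> Kc \<omega> x (t+j0+1) = Suc (Kc \<omega> x t) \<and> \<epsilon> < Y \<omega> x (t+j0+1) \<and> Y \<omega> x (t+j0+1) < M-\<epsilon>"
proof -
  have j0D: "inD ((S^^j0) (Y \<omega> x t))" unfolding j0_def using j by (rule LeastI)
  have j0le: "j0 \<le> j" unfolding j0_def using j by (rule Least_le)
  have nd: "\<forall>l<j0. \<not> inD ((S^^l) (Y \<omega> x t))" unfolding j0_def using not_less_Least by blast
  have f: "Y \<omega> x (t+j0) = (S^^j0) (Y \<omega> x t) \<and> Kc \<omega> x (t+j0) = Kc \<omega> x t"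
    using follow[OF refl nd, of j0] by simp
  then have D: "inD (Y \<omega> x (t+j0))" using j0D by simp
  have "Y \<omega> x (Suc (t+j0)) = \<beta> * Y \<omega> x (t+j0) - real (dig (Y \<omega> x (t+j0)) (\<omega> (Kc \<omega> x (t+j0))))"
    unfolding Y_Suc ee_def ..
  then have "\<epsilon> < Y \<omega> x (Suc (t+j0)) \<and> Y \<omega> x (Suc (t+j0)) < M-\<epsilon>"
    using branch_bounds[OF D] by simp
  moreover have "Kc \<omega> x (Suc (t+j0)) = Suc (Kc \<omega> x t)" using D f by (simp add: Kc_Suc)
  ultimately show ?thesis using j0le by simp
qed

lemma count:
  assumes HN: "\<forall>y. \<epsilon> \<le> y \<longrightarrow> y \<le> M-\<epsilon> \<longrightarrow> (\<exists>j\<le>N. inD ((S^^j) y))"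
  and x: "0 < x" "x < M"
  shows "\<exists>T::nat. \<forall>\<omega> n. real n - real T \<le> real (N+1) * real (Kc \<omega> x n)"
proof -
  have "0 < min x (M-x)" using x by simp
  from reach[OF this] obtain N0 where
    N0: "\<forall>y. min x (M-x) \<le> y \<longrightarrow> y \<le> M - min x (M-x) \<longrightarrow> (\<exists>j\<le>N0. inD ((S^^j) y))" by blast
  moreover have "min x (M-x) \<le> x" "x \<le> M - min x (M-x)" by auto
  ultimately obtain j where j: "inD ((S^^j) x)" by blast
  define T where "T = Suc (LEAST j. inD ((S^^j) x))"
  have start: "Kc \<omega> x T = 1 \<and> \<epsilon> < Y \<omega> x T \<and> Y \<omega> x T < M-\<epsilon>" for \<omega>
    using first_branch[of j \<omega> x 0] j unfolding T_def by simp
  have iter: "\<exists>t \<le> T + r*(N+1). r+1 \<le> Kc \<omega> x t \<and> \<epsilon> \<le> Y \<omega> x t \<and> Y \<omega> x t \<le> M-\<epsilon>" for r \<omega>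
  proof (induction r)
    case 0 then show ?case using start[of \<omega>] by (intro exI[of _ T]) auto
  next
    case (Suc r)
    then obtain t where t: "t \<le> T + r*(N+1)" "r+1 \<le> Kc \<omega> x t" "\<epsilon> \<le> Y \<omega> x t" "Y \<omega> x t \<le> M-\<epsilon>" by blast
    then obtain j where j: "j \<le> N" "inD ((S^^j) (Y \<omega> x t))" using HN by blast
    define j0 where "j0 = (LEAST j. inD ((S^^j) (Y \<omega> x t)))"
    have fb: "j0 \<le> j \<and> Kc \<omega> x (t+j0+1) = Suc (Kc \<omega> x t) \<and> \<epsilon> < Y \<omega> x (t+j0+1) \<and> Y \<omega> x (t+j0+1) < M-\<epsilon>"
      using first_branch[OF j(2)] unfolding j0_def by blast
    show ?case
      using fb t j by (intro exI[of _ "t+j0+1"]) auto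
  qed
  have "real n - real T \<le> real (N+1) * real (Kc \<omega> x n)" for \<omega> n
  proof (cases "n < T")
    case True
    have "0 \<le> real (N+1) * real (Kc \<omega> x n)" by simp
    then show ?thesis using True by linarith
  next
    case False
    define r where "r = (n - T) div (N+1)"
    have "r*(N+1) \<le> n - T" unfolding r_def by (metis div_mult_mod_eq le_add1)
    then have le: "T + r*(N+1) \<le> n" using False by simp
    have "n - T < (r+1)*(N+1)" unfolding r_def
      by (metis add.commute div_mult_mod_eq mod_less_divisor mult_Suc zero_less_Suc add_less_cancel_right Suc_eq_plus1 mult.commute)
    then have lt0: "real n - real T < real (r+1) * real (N+1)" using False
      by (metis not_less of_nat_diff of_nat_less_iff of_nat_mult)
    have lt: "real n - real T < real (N+1) * real (r+1)" using lt0 by (simp only: mult.commute)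
    obtain t where t: "t \<le> T + r*(N+1)" "r+1 \<le> Kc \<omega> x t" using iter by blast
    have "Kc \<omega> x t \<le> Kc \<omega> x n" using t le by (intro Kc_mono) simp
    then have "real (r+1) \<le> real (Kc \<omega> x n)" using t by linarith
    then have "real (N+1) * real (r+1) \<le> real (N+1) * real (Kc \<omega> x n)"
      by (intro mult_left_mono) auto
    then show ?thesis using lt by linarith
  qed
  then show ?thesis by blast
qed

lemma geo_quarter: "(\<Sum>i. ennreal ((1/2::real)^(i+2))) = ennreal (1/2)"
proof -
  have "(\<lambda>i. (1/2::real)^i) sums (1 / (1 - 1/2))" by (rule geometric_sums) simp
  then have "(\<lambda>i. 1/4 * (1/2::real)^i) sums (1/4 * (1 / (1 - 1/2)))" by (rule sums_mult)
  then have sm: "(\<lambda>i. (1/2::real)^(i+2)) sums (1/2)" by (simp add: power_add)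
  have "(\<Sum>i. ennreal ((1/2::real)^(i+2))) = ennreal (\<Sum>i. (1/2::real)^(i+2))"
    using sm by (intro suminf_ennreal2) (auto simp: sums_summable)
  also have "(\<Sum>i. (1/2::real)^(i+2)) = 1/2" using sm by (rule sums_unique[symmetric])
  finally show ?thesis .
qed

lemma H_pos:
  assumes HN: "\<forall>y. \<epsilon> \<le> y \<longrightarrow> y \<le> M-\<epsilon> \<longrightarrow> (\<exists>j\<le>N. inD ((S^^j) y))"
  and x: "0 < x" "x < M"
  and s: "0 \<le> s" "s \<le> ln 2 / (real (N+1) * ln (real m + 1))"
  shows "hausdorff_measure m s (Sigma_bm \<beta> m x) \<noteq> 0"
proof -
  obtain T where T: "\<forall>\<omega> n. real n - real T \<le> real (N+1) * real (Kc \<omega> x n)"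
    using count[OF HN x] by blast
  define C where "C = 2 powr ((real T + 1)/real (N+1))"
  have C0: "0 < C" unfolding C_def by simp
  define E where "E = Sigma_bm \<beta> m x"
  have cover: "ennreal (1/(2*C)) \<le> (\<Sum>i. ennreal (seq_diam m (U i) powr s))"
    if U: "\<forall>i. U i \<subseteq> seq_space m \<and> seq_diam m (U i) \<le> 1" "E \<subseteq> (\<Union>i. U i)" for U
  proof -
    define w where "w i = (SOME \<omega>. ee \<omega> x \<in> U i)" for i
    define nn where "nn i = (if 0 < seq_diam m (U i) then (SOME n. (1/(real m+1))^Suc n \<le> seq_diam m (U i)
        \<and> (\<forall>q\<in>U i. \<forall>j<n. q j = ee (w i) x j)) else T + (i+2)*(N+1))" for i
    define A where "A i = (if \<exists>\<omega>. ee \<omega> x \<in> U i then cyl (w i) (Kc (w i) x (nn i)) else {})" for i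
    have Asets: "range A \<subseteq> sets Pc" using cyl_sets by (auto simp: A_def)
    have wi: "ee (w i) x \<in> U i" if "ee \<omega> x \<in> U i" for \<omega> i
      using that unfolding w_def by (rule someI[where P="\<lambda>\<omega>. ee \<omega> x \<in> U i"])
    have nnD: "(1/(real m+1))^Suc (nn i) \<le> seq_diam m (U i) \<and> (\<forall>q\<in>U i. \<forall>j<nn i. q j = ee (w i) x j)"
      if "ee \<omega> x \<in> U i" "0 < seq_diam m (U i)" for \<omega> i
    proof -
      have ex: "\<exists>n. (1/(real m+1))^Suc n \<le> seq_diam m (U i) \<and> (\<forall>q\<in>U i. \<forall>j<n. q j = ee (w i) x j)"
        using diam_prefix[OF m1 that(2) wi[OF that(1)]] .
      have e: "nn i = (SOME n. (1/(real m+1))^Suc n \<le> seq_diam m (U i) \<and> (\<forall>q\<in>U i. \<forall>j<n. q j = ee (w i) x j))"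
        using that(2) unfolding nn_def by (simp only: if_True)
      show ?thesis unfolding e by (rule someI_ex[OF ex])
    qed
    have agree: "\<forall>j < nn i. ee (w i) x j = ee \<omega> x j" if "ee \<omega> x \<in> U i" for \<omega> i
    proof (cases "0 < seq_diam m (U i)")
      case True
      then show ?thesis using nnD[OF that True] that by auto
    next
      case False
      then have "ee \<omega> x = ee (w i) x" using diam_zero[of m "U i"] that wi[OF that] by simp
      then show ?thesis by simp
    qed
    have covA: "space Pc \<subseteq> (\<Union>i. A i)"
    proof
      fix \<omega> :: "nat \<Rightarrow> bool"
      have "ee \<omega> x \<in> E" using in_Sigma[OF x] unfolding E_def .
      then obtain i where i: "ee \<omega> x \<in> U i" using U(2) by blast
      have "\<forall>j < Kc (w i) x (nn i). w i j = \<omega> j" using det[OF agree[OF i]] by blast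
      then have "\<omega> \<in> A i" using i unfolding A_def cyl_def by auto
      then show "\<omega> \<in> (\<Union>i. A i)" by blast
    qed
    have Ab: "emeasure Pc (A i) \<le> ennreal (C * seq_diam m (U i) powr s) + ennreal ((1/2)^(i+2))" for i
    proof (cases "\<exists>\<omega>. ee \<omega> x \<in> U i")
      case False then show ?thesis by (simp add: A_def)
    next
      case True
      then obtain \<omega> where om: "ee \<omega> x \<in> U i" by blast
      define k where "k = Kc (w i) x (nn i)"
      have em: "emeasure Pc (A i) = ennreal ((1/2)^k)" using True by (simp add: A_def k_def cyl_emeasure)
      have Tk: "real (nn i) - real T \<le> real (N+1) * real k" using T unfolding k_def by blast
      have r: "(1/2::real)^k \<le> C * seq_diam m (U i) powr s + (1/2)^(i+2)"
      proof (cases "0 < seq_diam m (U i)")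
        case True
        have "(1/2::real)^k \<le> C * seq_diam m (U i) powr s"
          unfolding C_def
          by (rule key_ineq[OF m1 _ Tk refl s]) (use nnD[OF om True] U(1) in auto)
        moreover have "0 \<le> (1/2::real)^(i+2)" by simp
        ultimately show ?thesis by linarith
      next
        case False
        then have "nn i = T + (i+2)*(N+1)" unfolding nn_def by simp
        then have "real (nn i) - real T = real ((i+2)*(N+1))" by simp
        then have "real ((i+2)*(N+1)) \<le> real (N+1) * real k" using Tk by linarith
        then have "real ((i+2)*(N+1)) \<le> real ((N+1) * k)" by (simp only: of_nat_mult)
        then have "(i+2)*(N+1) \<le> k*(N+1)" by (simp only: of_nat_le_iff mult.commute)
        then have "i+2 \<le> k" using mult_le_cancel2[of "i+2" "N+1" k] by simp
        then have "(1/2::real)^k \<le> (1/2)^(i+2)" by (intro power_decreasing) auto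
        moreover have "0 \<le> C * seq_diam m (U i) powr s" using C0 by simp
        ultimately show ?thesis by linarith
      qed
      have "emeasure Pc (A i) \<le> ennreal (C * seq_diam m (U i) powr s + (1/2)^(i+2))"
        unfolding em using r by (rule ennreal_leI)
      also have "\<dots> = ennreal (C * seq_diam m (U i) powr s) + ennreal ((1/2)^(i+2))"
        using C0 by (intro ennreal_plus) auto
      finally show ?thesis .
    qed
    define Sm where "Sm = (\<Sum>i. ennreal (seq_diam m (U i) powr s))"
    have "1 = emeasure Pc (space Pc)" using prob_space.emeasure_space_1[OF Pc_prob] by simp
    also have "\<dots> \<le> emeasure Pc (\<Union>i. A i)"
      using covA Asets by (intro emeasure_mono) auto
    also have "\<dots> \<le> (\<Sum>i. emeasure Pc (A i))" by (rule emeasure_subadditive_countably[OF Asets])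
    also have "\<dots> \<le> (\<Sum>i. ennreal (C * seq_diam m (U i) powr s) + ennreal ((1/2)^(i+2)))"
      by (intro suminf_le Ab summableI)
    also have "\<dots> = (\<Sum>i. ennreal (C * seq_diam m (U i) powr s)) + (\<Sum>i. ennreal ((1/2::real)^(i+2)))"
      by (rule suminf_add[OF summableI summableI, symmetric])
    also have "(\<Sum>i. ennreal (C * seq_diam m (U i) powr s)) = ennreal C * Sm"
      unfolding Sm_def using C0 by (simp add: ennreal_mult)
    also have "(\<Sum>i. ennreal ((1/2::real)^(i+2))) = ennreal (1/2)" by (rule geo_quarter)
    finally have one: "1 \<le> ennreal C * Sm + ennreal (1/2)" .
    show ?thesis
    proof (rule ccontr)
      assume "\<not> ennreal (1/(2*C)) \<le> (\<Sum>i. ennreal (seq_diam m (U i) powr s))"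
      then have lt: "Sm < ennreal (1/(2*C))" unfolding Sm_def by simp
      then obtain r where r: "0 \<le> r" "Sm = ennreal r" by (cases Sm) auto
      have "r < 1/(2*C)" using lt r ennreal_less_iff by auto
      then have "C * r < 1/2" using C0 by (simp add: field_simps)
      moreover have "1 \<le> ennreal (C * r + 1/2)" using one r C0 by (simp add: ennreal_mult ennreal_plus)
      then have "1 \<le> C * r + 1/2" by (metis ennreal_1 ennreal_le_iff C0 r(1) add_nonneg_nonneg
          less_eq_real_def mult_nonneg_nonneg zero_le_divide_1_iff zero_le_numeral)
      ultimately show False by simp
    qed
  qed
  have "ennreal (1/(2*C)) \<le> hausdorff_pre m s 1 E"
    unfolding hausdorff_pre_def by (rule INF_greatest) (use cover in auto)
  also have "hausdorff_pre m s 1 E \<le> hausdorff_measure m s E"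
    unfolding hausdorff_measure_def by (rule SUP_upper) simp
  finally have "ennreal (1/(2*C)) \<le> hausdorff_measure m s E" .
  moreover have "0 < ennreal (1/(2*C))" using C0 by simp
  ultimately show ?thesis unfolding E_def by auto
qed

lemma dim_bound: "\<exists>c>0. \<forall>x. 0 < x \<and> x < M \<longrightarrow> ereal c \<le> hausdorff_dim m (Sigma_bm \<beta> m x)"
proof -
  obtain N where HN: "\<forall>y. \<epsilon> \<le> y \<longrightarrow> y \<le> M-\<epsilon> \<longrightarrow> (\<exists>j\<le>N. inD ((S^^j) y))"
    using reach[OF e0] by blast
  define c where "c = ln 2 / (real (N+1) * ln (real m + 1))"
  have c0: "0 < c" unfolding c_def using m1 by simp
  have "ereal c \<le> hausdorff_dim m (Sigma_bm \<beta> m x)" if x: "0 < x" "x < M" for x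
    unfolding hausdorff_dim_def
  proof (rule Inf_greatest)
    fix z assume "z \<in> {ereal s |s. 0 \<le> s \<and> hausdorff_measure m s (Sigma_bm \<beta> m x) = 0}"
    then obtain s where s: "z = ereal s" "0 \<le> s" "hausdorff_measure m s (Sigma_bm \<beta> m x) = 0" by blast
    have "\<not> s \<le> c" using H_pos[OF HN x s(2)] s(3) unfolding c_def by blast
    then show "ereal c \<le> z" using s(1) by simp
  qed
  then show ?thesis using c0 by blast
qed

end


lemma eps_prod:
  fixes \<beta> \<epsilon> X :: real
  assumes "1 < \<beta>" "\<epsilon> \<le> X / (2*(\<beta>+1))"
  shows "(\<beta>+1)*\<epsilon> \<le> X/2"
proof -
  have "(\<beta>+1)*\<epsilon> \<le> (\<beta>+1)*(X / (2*(\<beta>+1)))" using assms by (intro mult_left_mono) auto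
  also have "\<dots> = X/2" using assms by (simp add: field_simps)
  finally show ?thesis .
qed

lemma dyn_exists:
  fixes m :: nat and \<beta> :: real
  assumes b1: "1 < \<beta>" and bG: "\<beta> < G m"
  shows "\<exists>\<epsilon>. dyn m \<beta> (real m / (\<beta> - 1)) \<epsilon>"
proof -
  define M where "M = real m / (\<beta> - 1)"
  have Mdef: "M * (\<beta> - 1) = real m" unfolding M_def using b1 by simp
  have Mb: "M * \<beta> = M + real m" using Mdef by (simp add: algebra_simps)
  define k where "k = m div 2"
  show ?thesis
  proof (cases "even m")
    case True
    then have mk: "m = 2*k" unfolding k_def by simp
    have Gm: "G m = real k + 1" using True unfolding G_def k_def by simp
    have "m \<noteq> 0" using Gm bG b1 mk by auto
    then have k1: "1 \<le> k" using mk by simp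
    have "2*(\<beta>-1) < M*(\<beta>-1)" using Mdef mk bG Gm by simp
    then have M2: "2 < M" using b1 by (intro mult_right_less_imp_less[of 2 "\<beta>-1" M]) auto
    define X where "X = M*\<beta> - \<beta> - 1"
    have X0: "0 < X" unfolding X_def using Mb M2 mk bG Gm k1 by simp
    define \<epsilon> where "\<epsilon> = min ((M-2)/4) (X/(2*(\<beta>+1)))"
    have e0: "0 < \<epsilon>" unfolding \<epsilon>_def using M2 X0 b1 by simp
    have eM: "\<epsilon> \<le> (M-2)/4" unfolding \<epsilon>_def by (rule min.cobounded1)
    have "\<epsilon> \<le> X/(2*(\<beta>+1))" unfolding \<epsilon>_def by (rule min.cobounded2)
    then have eX: "(\<beta>+1)*\<epsilon> \<le> X/2" by (rule eps_prod[OF b1])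
    have "dyn m \<beta> M \<epsilon>"
    proof (unfold_locales)
      show "1 \<le> m" using k1 mk by simp
      show "1 < \<beta>" by fact
      show "M * (\<beta> - 1) = real m" by fact
      show "0 < \<epsilon>" by fact
      show "1 + \<epsilon> < M" using eM M2 by simp
      show "(\<beta>+1)*(1+\<epsilon>) < M*\<beta>" using eX X0 unfolding X_def by (simp add: algebra_simps)
      fix z assume "M - 1 - \<epsilon> \<le> z" "z \<le> 1 + \<epsilon>"
      then show "\<exists>d::nat. d+1 \<le> m \<and> real d+1+\<epsilon> < \<beta>*z \<and> \<beta>*z < real d+M-\<epsilon>"
        using eM M2 by simp
    qed
    then show ?thesis unfolding M_def by blast
  next
    case False
    then have mk: "m = 2*k+1" unfolding k_def by presburger
    define r where "r = real k"
    have Gm: "G m = (r + 1 + sqrt (r^2 + 6*r + 5))/2" using False unfolding G_def k_def r_def by (simp add: Let_def)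
    have r0: "0 \<le> r" unfolding r_def by simp
    have Q: "\<beta>^2 - (r+1)*\<beta> - (r+1) < 0"
    proof (cases "2*\<beta> - (r+1) < 0")
      case True
      then have "\<beta>*(\<beta> - (r+1)) < 0" using b1 by (simp add: mult_pos_neg)
      then show ?thesis using r0 by (simp add: power2_eq_square algebra_simps)
    next
      case False
      have lt: "2*\<beta> - (r+1) < sqrt (r^2 + 6*r + 5)" using bG Gm by simp
      have "(2*\<beta> - (r+1))^2 < (sqrt (r^2 + 6*r + 5))^2"
        using lt False by (intro power_strict_mono) auto
      also have "\<dots> = r^2 + 6*r + 5" using r0 by simp
      finally show ?thesis by (simp add: power2_eq_square algebra_simps)
    qed
    define \<gamma> where "\<gamma> = M + r - \<beta>"
    have "\<gamma>*(\<beta>-1) = M*(\<beta>-1) + (r - \<beta>)*(\<beta>-1)" unfolding \<gamma>_def by (simp add: algebra_simps)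
    also have "\<dots> = - (\<beta>^2 - (r+1)*\<beta> - (r+1))" using Mdef mk unfolding r_def
      by (simp add: power2_eq_square algebra_simps)
    finally have "0 < \<gamma>*(\<beta>-1)" using Q by simp
    then have g0: "0 < \<gamma>" using b1 by (simp add: zero_less_mult_iff)
    have bM1: "\<beta>*(M-1) = \<gamma> + r + 1" using Mb mk unfolding \<gamma>_def r_def by (simp add: algebra_simps)
    have M1: "1 < M"
    proof -
      have "0 < \<beta>*(M-1)" using bM1 g0 r0 by simp
      then show ?thesis using b1 by (simp add: zero_less_mult_iff)
    qed
    define X where "X = M*\<beta> - \<beta> - 1"
    have X0: "0 < X" unfolding X_def using bM1 g0 r0 by (simp add: algebra_simps)
    define \<epsilon> where "\<epsilon> = min (\<gamma>/(2*(\<beta>+1))) (min ((M-1)/2) (X/(2*(\<beta>+1))))"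
    have e0: "0 < \<epsilon>" unfolding \<epsilon>_def using M1 X0 g0 b1 by simp
    have eM: "\<epsilon> \<le> (M-1)/2" unfolding \<epsilon>_def by (meson min.cobounded1 min.cobounded2 order.trans)
    have "\<epsilon> \<le> X/(2*(\<beta>+1))" unfolding \<epsilon>_def by (meson min.cobounded1 min.cobounded2 order.trans)
    then have eX: "(\<beta>+1)*\<epsilon> \<le> X/2" by (rule eps_prod[OF b1])
    have "\<epsilon> \<le> \<gamma>/(2*(\<beta>+1))" unfolding \<epsilon>_def by (rule min.cobounded1)
    then have eg: "(\<beta>+1)*\<epsilon> \<le> \<gamma>/2" by (rule eps_prod[OF b1])
    have "dyn m \<beta> M \<epsilon>"
    proof (unfold_locales)
      show "1 \<le> m" using mk by simp
      show "1 < \<beta>" by fact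
      show "M * (\<beta> - 1) = real m" by fact
      show "0 < \<epsilon>" by fact
      show "1 + \<epsilon> < M" using eM M1 by simp
      show "(\<beta>+1)*(1+\<epsilon>) < M*\<beta>" using eX X0 unfolding X_def by (simp add: algebra_simps)
      fix z assume z: "M - 1 - \<epsilon> \<le> z" "z \<le> 1 + \<epsilon>"
      have "\<beta>*(M-1-\<epsilon>) \<le> \<beta>*z" using z b1 by (intro mult_left_mono) auto
      moreover have "\<beta>*z \<le> \<beta>*(1+\<epsilon>)" using z b1 by (intro mult_left_mono) auto
      ultimately have "real k+1+\<epsilon> < \<beta>*z \<and> \<beta>*z < real k+M-\<epsilon>"
        using bM1 eg g0 unfolding r_def \<gamma>_def by (simp add: algebra_simps)
      moreover have "k + 1 \<le> m" using mk by simp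
      ultimately show "\<exists>d::nat. d+1 \<le> m \<and> real d+1+\<epsilon> < \<beta>*z \<and> \<beta>*z < real d+M-\<epsilon>" by blast
    qed
    then show ?thesis unfolding M_def by blast
  qed
qed

theorem theorem5p1:
  fixes m :: nat and \<beta> :: real
  assumes "1 < \<beta>" and "\<beta> < G m"
  shows "\<exists>c > 0. \<forall>x. 0 < x \<and> x < real m / (\<beta> - 1) \<longrightarrow>
           ereal c \<le> hausdorff_dim m (Sigma_bm \<beta> m x)"
proof -
  obtain \<epsilon> where "dyn m \<beta> (real m / (\<beta> - 1)) \<epsilon>" using dyn_exists[OF assms] by blast
  then show ?thesis by (rule dyn.dim_bound)
qed

end
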